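(* Let $N\ge 2$ and $1\le\tilde N\le N-1$ be integers. Let $\beta>0$ satisfy $(\beta+1)^{N-\tilde N-1}>\beta^{N-\tilde N+1}$, and suppose that, for all $x\in\mathcal{X}$, $$V_{\tilde N+1}^{\tilde N}(x)\le (\beta+1)\,V_{\tilde N}^{\tilde N}(x)\qquad\text{and}\qquad V_n^{\tilde N}(x)\le (\beta+1)\,l(x,\mu_n(x))\ \text{ for all } n\in\{\tilde N+1,\dots,N\}.$$ Set $\alpha=1-\frac{\beta^{N-\tilde N+1}}{(\beta+1)^{N-\tilde N-1}}$. Then for every $x\in\mathcal{X}$, $$V_N^{\tilde N}\big(f(x,\mu_N(x))\big)-V_N^{\tilde N}(x)\le -\alpha\, l\big(x,\mu_N(x)\big).$$ Hence $V_N^{\tilde N}$, which is positive definite, is a Lyapunov function for the closed-loop system $x(k+1)=f(x(k),\mu_N(x(k)))$ on $\mathcal{X}$.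
   Context: Let $\mathcal{D}\subset\mathbb{R}^n$ and $\mathcal{U}\subset\mathbb{R}^m$ be compact, and let $f:\mathcal{D}\times\mathcal{U}\to\mathcal{D}$ define the discrete-time system $x(k+1)=f(x(k),u(k))$, with $f(0,0)=0$. The stage cost $l:\mathcal{D}\times\mathcal{U}\to[0,\infty)$ is positive definite with $l(0,0)=0$. The set $\mathcal{X}\subseteq\mathcal{D}$ is control invariant: for every $x\in\mathcal{X}$ there is $u\in\mathcal{U}$ with $f(x,u)\in\mathcal{X}$. For $x\in\mathcal{X}$ write $\mathcal{U}(x)=\{u\in\mathcal{U}: f(x,u)\in\mathcal{X}\}$. Fix integers $N$ and $\tilde N$ with $0\le\tilde N\le N-1$. Define value functions on $\mathcal{X}$ recursively (dynamic programming form of the MPC problem with prediction horizon $N$ in which the state constraint $x\in\mathcal{X}$ is imposed only during the first $N-\tilde N$ steps, the last $\tilde N$ steps being unconstrained): - $V_0^{\tilde N}\equiv 0$. - For $n\in\{1,\dots,\tilde N\}$: $V_n^{\tilde N}(x)=\min_{u\in\mathcal{U}}\big[V_{n-1}^{\tilde N}(f(x,u))+l(x,u)\big]$, with $\mu_n(x)$ a minimizer. - For $n\in\{\tilde N+1,\dots,N\}$: $V_n^{\tilde N}(x)=\min_{u\in\mathcal{U}(x)}\big[V_{n-1}^{\tilde N}(f(x,u))+l(x,u)\big]$, with $\mu_n(x)$ a minimizer; in particular $f(x,\mu_n(x))\in\mathcal{X}$. All minima are assumed to be attained. The closed-loop MPC feedback is $\mu_N$. *)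

theory Defs
  imports "HOL-Analysis.Analysis"
begin

definition adm :: "('x \<Rightarrow> 'u \<Rightarrow> 'x) \<Rightarrow> 'x set \<Rightarrow> 'u set \<Rightarrow> 'x \<Rightarrow> 'u set" where
  "adm f X U x = {u \<in> U. f x u \<in> X}"

text \<open>Dynamic-programming value functions V_n^{Nt}: the last Nt steps (n \<le> Nt)
  are unconstrained (minimum over U), the first steps (n > Nt) are minimised over adm.\<close>
fun Vfun :: "('x \<Rightarrow> 'u \<Rightarrow> 'x) \<Rightarrow> ('x \<Rightarrow> 'u \<Rightarrow> real) \<Rightarrow> 'x set \<Rightarrow> 'u set
             \<Rightarrow> nat \<Rightarrow> nat \<Rightarrow> 'x \<Rightarrow> real" where
  "Vfun f l X U Nt 0 x = 0"
| "Vfun f l X U Nt (Suc n) x =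
     (if Suc n \<le> Nt
      then (INF u\<in>U. Vfun f l X U Nt n (f x u) + l x u)
      else (INF u\<in>adm f X U x. Vfun f l X U Nt n (f x u) + l x u))"

end

theory Submission
  imports Defs
begin

theorem mainTheorem3:
  fixes f :: "real^'n \<Rightarrow> real^'m \<Rightarrow> real^'n"
    and l :: "real^'n \<Rightarrow> real^'m \<Rightarrow> real"
    and D X :: "(real^'n) set" and U :: "(real^'m) set"
    and mu :: "nat \<Rightarrow> real^'n \<Rightarrow> real^'m"
    and N Nt :: nat and \<beta> :: real
  assumes D_compact: "compact D" and U_compact: "compact U"
    and f_maps: "\<And>x u. x \<in> D \<Longrightarrow> u \<in> U \<Longrightarrow> f x u \<in> D"
    and f_zero: "f 0 0 = 0" and zero_D: "0 \<in> D" and zero_U: "0 \<in> U"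
    and l_nonneg: "\<And>x u. x \<in> D \<Longrightarrow> u \<in> U \<Longrightarrow> l x u \<ge> 0"
    and l_zero: "l 0 0 = 0"
    and l_posdef: "\<And>x u. x \<in> D \<Longrightarrow> u \<in> U \<Longrightarrow> (x, u) \<noteq> (0, 0) \<Longrightarrow> l x u > 0"
    and X_sub: "X \<subseteq> D"
    and X_inv: "\<And>x. x \<in> X \<Longrightarrow> \<exists>u\<in>U. f x u \<in> X"
    and mu_unc: "\<And>n x. 1 \<le> n \<Longrightarrow> n \<le> Nt \<Longrightarrow> x \<in> D \<Longrightarrow>
        mu n x \<in> U \<and>
        (\<forall>u\<in>U. Vfun f l X U Nt (n - 1) (f x (mu n x)) + l x (mu n x)
                 \<le> Vfun f l X U Nt (n - 1) (f x u) + l x u)"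
    and mu_con: "\<And>n x. Nt + 1 \<le> n \<Longrightarrow> n \<le> N \<Longrightarrow> x \<in> X \<Longrightarrow>
        mu n x \<in> adm f X U x \<and>
        (\<forall>u\<in>adm f X U x. Vfun f l X U Nt (n - 1) (f x (mu n x)) + l x (mu n x)
                 \<le> Vfun f l X U Nt (n - 1) (f x u) + l x u)"
    and N_ge: "N \<ge> 2" and Nt_ge: "1 \<le> Nt" and Nt_le: "Nt \<le> N - 1"
    and beta_pos: "\<beta> > 0"
    and beta_cond: "(\<beta> + 1) ^ (N - Nt - 1) > \<beta> ^ (N - Nt + 1)"
    and hyp1: "\<And>x. x \<in> X \<Longrightarrow>
        Vfun f l X U Nt (Nt + 1) x \<le> (\<beta> + 1) * Vfun f l X U Nt Nt x"
    and hyp2: "\<And>x n. x \<in> X \<Longrightarrow> Nt + 1 \<le> n \<Longrightarrow> n \<le> N \<Longrightarrow>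
        Vfun f l X U Nt n x \<le> (\<beta> + 1) * l x (mu n x)"
  shows "\<forall>x\<in>X. Vfun f l X U Nt N (f x (mu N x)) - Vfun f l X U Nt N x
           \<le> - (1 - \<beta> ^ (N - Nt + 1) / (\<beta> + 1) ^ (N - Nt - 1)) * l x (mu N x)"
proof -
  define V where "V = Vfun f l X U Nt"
  define q where "q = \<beta> / (\<beta> + 1)"
  have q_nn: "q \<ge> 0" using beta_pos by (simp add: q_def)
  have Veq: "V n y = V (n - 1) (f y (mu n y)) + l y (mu n y)"
    if A: "Nt + 1 \<le> n" "n \<le> N" "y \<in> X" for n y
  proof -
    obtain m where m: "n = Suc m" using A(1) by (cases n) auto
    have nle: "\<not> Suc m \<le> Nt" using that(1) m by simp
    have mc: "mu n y \<in> adm f X U y \<and> (\<forall>u\<in>adm f X U y. V (n - 1) (f y (mu n y)) + l y (mu n y)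
                 \<le> V (n - 1) (f y u) + l y u)" using mu_con[OF that] by (simp add: V_def)
    have "V n y = (INF u\<in>adm f X U y. V m (f y u) + l y u)"
      using nle m by (simp add: V_def)
    also have "\<dots> = V m (f y (mu n y)) + l y (mu n y)"
      apply (rule cInf_eq_minimum)
      using mc m by auto
    finally show ?thesis using m by simp
  qed
  have Vle: "V n y \<le> V (n - 1) (f y u) + l y u"
    if "Nt + 1 \<le> n" "n \<le> N" "y \<in> X" "u \<in> adm f X U y" for n y u
    using Veq[OF that(1-3)] mu_con[OF that(1-3)] that(4) by (simp add: V_def)
  have muX: "f y (mu n y) \<in> X" if "Nt + 1 \<le> n" "n \<le> N" "y \<in> X" for n y
    using mu_con[OF that] by (simp add: adm_def)
  have muA: "mu n y \<in> adm f X U y" if "Nt + 1 \<le> n" "n \<le> N" "y \<in> X" for n y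
    using mu_con[OF that] by simp
  have key: "\<forall>y n. y \<in> X \<longrightarrow> n = Nt + k \<longrightarrow> n + 1 \<le> N \<longrightarrow>
      V (n + 1) y - V n y \<le> \<beta> * q ^ k * V n y" for k
  proof (induction k)
    case 0
    then show ?case using hyp1 by (auto simp: V_def algebra_simps)
  next
    case (Suc k)
    show ?case
    proof (intro allI impI)
      fix y n assume y: "y \<in> X" and n: "n = Nt + Suc k" and nN: "n + 1 \<le> N"
      define u where "u = mu n y"
      define y' where "y' = f y u"
      have y'X: "y' \<in> X" using muX[of n y] n nN y by (simp add: y'_def u_def)
      have e1: "V n y = V (n - 1) y' + l y u" using Veq[of n y] n nN y by (simp add: y'_def u_def)
      have e2: "V (n + 1) y \<le> V n y' + l y u"
        using Vle[of "n+1" y u] muA[of n y] n nN y by (simp add: y'_def u_def adm_def)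
      have ih: "V n y' - V (n - 1) y' \<le> \<beta> * q ^ k * V (n - 1) y'"
      proof -
        have "n - 1 = Nt + k" "n - 1 + 1 = n" using n by auto
        thus ?thesis using Suc.IH[rule_format, of y' "n - 1"] y'X nN by simp
      qed
      have h2: "V n y \<le> (\<beta> + 1) * l y u" using hyp2[of y n] y n nN by (simp add: V_def u_def)
      have "V (n - 1) y' \<le> q * V n y"
      proof -
        have "l y u \<ge> V n y / (\<beta> + 1)" using h2 beta_pos by (simp add: field_simps)
        hence "V (n - 1) y' \<le> V n y - V n y / (\<beta> + 1)" using e1 by simp
        also have "\<dots> = q * V n y" using beta_pos by (simp add: q_def field_simps)
        finally show ?thesis .
      qed
      hence "\<beta> * q ^ k * V (n - 1) y' \<le> \<beta> * q ^ k * (q * V n y)"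
        using beta_pos q_nn by (intro mult_left_mono) auto
      hence "V (n + 1) y - V n y \<le> \<beta> * q ^ k * (q * V n y)" using e1 e2 ih by linarith
      thus "V (n + 1) y - V n y \<le> \<beta> * q ^ Suc k * V n y" by (simp add: algebra_simps)
    qed
  qed
  show ?thesis
  proof
    fix x assume x: "x \<in> X"
    define u where "u = mu N x"
    define x1 where "x1 = f x u"
    define K where "K = N - 1 - Nt"
    have NK: "N - 1 = Nt + K" "N - 1 + 1 = N" using Nt_le N_ge by (auto simp: K_def)
    have x1X: "x1 \<in> X" using muX[of N x] Nt_le N_ge x by (simp add: x1_def u_def)
    have e1: "V N x = V (N - 1) x1 + l x u" using Veq[of N x] Nt_le N_ge x by (simp add: x1_def u_def)
    have h2: "V N x \<le> (\<beta> + 1) * l x u" using hyp2[of x N] Nt_le N_ge x by (simp add: V_def u_def)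
    have k: "V N x1 - V (N - 1) x1 \<le> \<beta> * q ^ K * V (N - 1) x1"
      using key[of K, rule_format, of x1 "N - 1"] x1X NK by simp
    have b: "V (N - 1) x1 \<le> \<beta> * l x u" using e1 h2 by (simp add: algebra_simps)
    have "\<beta> * q ^ K * V (N - 1) x1 \<le> \<beta> * q ^ K * (\<beta> * l x u)"
      using b beta_pos q_nn by (intro mult_left_mono) auto
    hence "V N x1 - V N x \<le> \<beta> * q ^ K * (\<beta> * l x u) - l x u" using k e1 by linarith
    also have "\<beta> * q ^ K * (\<beta> * l x u) - l x u
        = - (1 - \<beta> ^ (N - Nt + 1) / (\<beta> + 1) ^ (N - Nt - 1)) * l x u"
    proof -
      have ex: "N - Nt + 1 = K + 2" "N - Nt - 1 = K" using Nt_le N_ge by (auto simp: K_def)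
      have "\<beta> * q ^ K * (\<beta> * l x u) = \<beta> ^ (K + 2) / (\<beta> + 1) ^ K * l x u"
        unfolding q_def power_divide by (simp add: power_add power2_eq_square)
      thus ?thesis unfolding ex by (simp add: algebra_simps)
    qed
    finally show "Vfun f l X U Nt N (f x (mu N x)) - Vfun f l X U Nt N x
           \<le> - (1 - \<beta> ^ (N - Nt + 1) / (\<beta> + 1) ^ (N - Nt - 1)) * l x (mu N x)"
      by (simp add: V_def x1_def u_def)
  qed
qed

end
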